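(* Let $V$ be a finite set (the vertex set of a graph or hypergraph). A \emph{bad setting} is a pair $(Z,c)$ with $Z\subset V$ and $c$ a coloring of $Z$ (with colors from $\mathbb{N}$); fix a family of bad settings. Let $\mathcal{Z}=\{Z\subset V:\ \exists c \text{ such that } (Z,c) \text{ is a bad setting}\}$, indexed as $\{Z_i\}_{i\in I}$ with $I\subset\mathbb{N}$ finite. For each $i\in I$ let $C_i=\{c: (Z_i,c)\text{ is a bad setting}\}$, and suppose there are integers $0\le k_i<|Z_i|$ and $m_i\ge 1$ such that for every vertex $v\in Z_i$ there is a set $K_{i,v}\subset Z_i\setminus\{v\}$ with $|K_{i,v}|=k_i$ such that every coloring of $K_{i,v}$ extends in at most $m_i$ ways to a coloring $c\in C_i$ of $Z_i$. Put $l_i=|Z_i|-k_i$ and $E=\{l\in\mathbb{N}:\exists i\in I,\ l_i=l\}$. For $l\in E$ and $v\in V$ let $Q_l(v)$ be the set of sets $Z_j\in\mathcal{Z}$ with $v\in Z_j$ and $l_j=l$, and let $d_l=\max_{v\in V}|Q_l(v)|$. Let $\phi_E(x)=1+\sum_{l\in E}x^l$, let $\tau>0$ satisfy $\phi_E(\tau)-\tau\phi_E'(\tau)=0$ (assumed to exist), and set $\gamma=\phi_E'(\tau)$. Then there exists a coloring of $V$ using $\left\lceil \gamma \sup_{i\in I}(d_{l_i}m_i)^{1/l_i}\right\rceil$ colors that avoids all bad settings, i.e. for no $i\in I$ is its restriction to $Z_i$ an element of $C_i$.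
   Context: A coloring of $V$ avoids a bad setting $(Z,c)$ if its restriction to $Z$ is not equal to $c$. *)

theory Defs
  imports "HOL-Analysis.Analysis"
begin

text \<open>A coloring of a set Z with colors from nat is an extensional function on Z
  (value undefined outside Z), i.e. an element of  extensional Z.\<close>

definition phiE :: "nat set \<Rightarrow> real \<Rightarrow> real" where
  "phiE E x = 1 + (\<Sum>l\<in>E. x ^ l)"

end

theory Submission imports Defs begin

locale cnt =
  fixes V :: "'a set" and B :: "('a set \<times> ('a \<Rightarrow> nat)) set" and I :: "nat set"
    and Zs :: "nat \<Rightarrow> 'a set" and Kf :: "nat \<Rightarrow> 'a \<Rightarrow> 'a set"
    and m :: "nat \<Rightarrow> nat" and l :: "nat \<Rightarrow> nat" and N :: nat
  assumes finV: "finite V" and finI: "finite I"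
    and ZsV: "\<forall>i\<in>I. Zs i \<subseteq> V" and Zs_ne: "\<forall>i\<in>I. Zs i \<noteq> {}"
    and Kf: "\<forall>i\<in>I. \<forall>v\<in>Zs i. Kf i v \<subseteq> Zs i - {v} \<and> card (Zs i - Kf i v) = l i \<and>
          (\<forall>g\<in>extensional (Kf i v). finite {c. (Zs i, c) \<in> B \<and> restrict c (Kf i v) = g} \<and>
             card {c. (Zs i, c) \<in> B \<and> restrict c (Kf i v) = g} \<le> m i)"
begin

definition C where
  "C U = {g \<in> PiE U (\<lambda>_. {..<N}). \<forall>j\<in>I. Zs j \<subseteq> U \<longrightarrow> (Zs j, restrict g (Zs j)) \<notin> B}"

lemma C_restrict: "W' \<subseteq> W \<Longrightarrow> g \<in> C W \<Longrightarrow> restrict g W' \<in> C W'"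
proof -
  assume a: "W' \<subseteq> W" "g \<in> C W"
  have "\<And>j. Zs j \<subseteq> W' \<Longrightarrow> restrict (restrict g W') (Zs j) = restrict g (Zs j)"
    by (auto simp: restrict_def fun_eq_iff)
  with a show ?thesis unfolding C_def by (auto simp: PiE_iff)
qed

lemma C_sub: "C U \<subseteq> PiE U (\<lambda>_. {..<N})" unfolding C_def by auto

lemma finite_C: "finite U \<Longrightarrow> finite (C U)"
  by (rule finite_subset[OF C_sub]) (auto intro: finite_PiE)

lemma card_G:
  assumes U: "finite U" and v: "v \<in> U"
  shows "card {g \<in> PiE U (\<lambda>_. {..<N}). restrict g (U-{v}) \<in> C (U-{v})} = N * card (C (U-{v}))"
proof -
  let ?G = "{g \<in> PiE U (\<lambda>_. {..<N}). restrict g (U-{v}) \<in> C (U-{v})}"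
  let ?f = "\<lambda>(h, a). h(v := a)"
  have "?G = ?f ` (C (U-{v}) \<times> {..<N})"
  proof
    show "?G \<subseteq> ?f ` (C (U-{v}) \<times> {..<N})"
    proof
      fix g assume g: "g \<in> ?G"
      have "g = (restrict g (U-{v}))(v := g v)"
        using g v by (auto simp: PiE_iff extensional_def restrict_def fun_eq_iff)
      moreover have "g v < N" using g v by (auto simp: PiE_iff)
      ultimately show "g \<in> ?f ` (C (U-{v}) \<times> {..<N})" using g
        by (intro image_eqI[of _ _ "(restrict g (U-{v}), g v)"]) auto
    qed
  next
    show "?f ` (C (U-{v}) \<times> {..<N}) \<subseteq> ?G"
    proof
      fix x assume "x \<in> ?f ` (C (U-{v}) \<times> {..<N})"
      then obtain h a where h: "h \<in> C (U-{v})" and a: "a < N" and x: "x = h(v:=a)" by auto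
      have hP: "h \<in> PiE (U-{v}) (\<lambda>_. {..<N})" using h C_sub by blast
      have "restrict (h(v := a)) (U-{v}) = h"
        using hP by (auto simp: PiE_iff extensional_def restrict_def fun_eq_iff)
      moreover have "h(v:=a) \<in> PiE U (\<lambda>_. {..<N})"
        using hP a v by (auto simp: PiE_iff extensional_def)
      ultimately show "x \<in> ?G"
        using h x by simp
    qed
  qed
  moreover have "inj_on ?f (C (U-{v}) \<times> {..<N})"
  proof (rule inj_onI, clarsimp)
    fix h a h' a'
    assume h1: "h \<in> C (U-{v})" and h2: "h' \<in> C (U-{v})" and eq: "h(v := a) = h'(v := a')"
    have hP: "h \<in> extensional (U-{v})" "h' \<in> extensional (U-{v})"
      using subsetD[OF C_sub h1] subsetD[OF C_sub h2] by (auto simp: PiE_iff)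
    from eq have "a = a'" by (metis fun_upd_same)
    moreover have "h = h'"
    proof
      fix x show "h x = h' x"
      proof (cases "x = v")
        case True then show ?thesis using hP by (auto simp: extensional_def)
      next
        case False then show ?thesis using fun_cong[OF eq, of x] by simp
      qed
    qed
    ultimately show "h = h' \<and> a = a'" by simp
  qed
  ultimately show ?thesis
    by (simp add: card_image card_cartesian_product)
qed

lemma card_fibers_le:
  assumes "finite T" "\<forall>x\<in>A. f x \<in> T" "\<And>t. t \<in> T \<Longrightarrow> card {x\<in>A. f x = t} \<le> M"
    "\<And>t. t \<in> T \<Longrightarrow> finite {x\<in>A. f x = t}"
  shows "card A \<le> M * card T"
proof -
  have "A = (\<Union>t\<in>T. {x\<in>A. f x = t})" using assms(2) by auto
  then have "card A \<le> (\<Sum>t\<in>T. card {x\<in>A. f x = t})"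
    by (metis card_UN_le assms(1))
  also have "\<dots> \<le> (\<Sum>t\<in>T. M)" by (rule sum_mono) (use assms(3) in auto)
  finally show ?thesis by (simp add: mult.commute)
qed

lemma fiber_bound:
  assumes UV: "U \<subseteq> V" and v: "v \<in> U" and j: "j \<in> I" and ZU: "Zs j \<subseteq> U" and vZ: "v \<in> Zs j"
  shows "card {g \<in> {g \<in> PiE U (\<lambda>_. {..<N}). restrict g (U-{v}) \<in> C (U-{v})}.
            (Zs j, restrict g (Zs j)) \<in> B} \<le> m j * card (C (U - (Zs j - Kf j v)))"
proof -
  define S where "S = Zs j - Kf j v"
  define K where "K = Kf j v"
  let ?F = "{g \<in> {g \<in> PiE U (\<lambda>_. {..<N}). restrict g (U-{v}) \<in> C (U-{v})}.
            (Zs j, restrict g (Zs j)) \<in> B}"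
  have KZ: "K \<subseteq> Zs j - {v}" and Kb: "\<forall>g\<in>extensional K. finite {c. (Zs j, c) \<in> B \<and> restrict c K = g} \<and>
             card {c. (Zs j, c) \<in> B \<and> restrict c K = g} \<le> m j"
    using Kf j vZ unfolding K_def by auto
  have finU: "finite U" using UV finV finite_subset by blast
  have vS: "v \<in> S" using KZ vZ unfolding S_def K_def by auto
  have KUS: "K \<subseteq> U - S" using KZ ZU unfolding S_def K_def by auto
  have SZ: "S \<subseteq> Zs j" unfolding S_def by auto
  have "card ?F \<le> m j * card (C (U - S))"
  proof (rule card_fibers_le[where f = "\<lambda>g. restrict g (U - S)"])
    show "finite (C (U - S))" using finU by (auto intro: finite_C)
    show "\<forall>x\<in>?F. restrict x (U - S) \<in> C (U - S)"
    proof
      fix g assume g: "g \<in> ?F"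
      then have "restrict (restrict g (U-{v})) (U - S) \<in> C (U - S)"
        using vS by (intro C_restrict[of "U-S" "U-{v}" "restrict g (U-{v})"]) auto
      moreover have "restrict (restrict g (U-{v})) (U - S) = restrict g (U - S)"
        using vS by (auto simp: restrict_def fun_eq_iff)
      ultimately show "restrict g (U - S) \<in> C (U - S)" by simp
    qed
    fix h assume h: "h \<in> C (U - S)"
    let ?Fh = "{x \<in> ?F. restrict x (U - S) = h}"
    let ?T = "{c. (Zs j, c) \<in> B \<and> restrict c K = restrict h K}"
    have hK: "restrict h K \<in> extensional K" by simp
    have finT: "finite ?T" and cT: "card ?T \<le> m j" using Kb hK by auto
    have inj: "inj_on (\<lambda>g. restrict g (Zs j)) ?Fh"
    proof (rule inj_onI)
      fix g1 g2 assume g1: "g1 \<in> ?Fh" and g2: "g2 \<in> ?Fh" and eq: "restrict g1 (Zs j) = restrict g2 (Zs j)"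
      have e1: "g1 \<in> extensional U" "g2 \<in> extensional U" using g1 g2 by (auto simp: PiE_iff)
      show "g1 = g2"
      proof (rule extensionalityI[OF e1])
        fix x assume x: "x \<in> U"
        show "g1 x = g2 x"
        proof (cases "x \<in> S")
          case True then show ?thesis using SZ fun_cong[OF eq, of x] by (auto simp: restrict_def)
        next
          case False
          have "restrict g1 (U - S) x = restrict g2 (U - S) x" using g1 g2 by simp
          then show ?thesis using False x by (simp add: restrict_def)
        qed
      qed
    qed
    have img: "(\<lambda>g. restrict g (Zs j)) ` ?Fh \<subseteq> ?T"
    proof
      fix y assume "y \<in> (\<lambda>g. restrict g (Zs j)) ` ?Fh"
      then obtain g where g: "g \<in> ?Fh" and y: "y = restrict g (Zs j)" by blast
      have "restrict (restrict g (Zs j)) K = restrict g K"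
        using KZ unfolding K_def by (auto simp: restrict_def fun_eq_iff)
      also have "\<dots> = restrict (restrict g (U - S)) K"
        using KUS by (auto simp: restrict_def fun_eq_iff)
      also have "\<dots> = restrict h K" using g by simp
      finally show "y \<in> ?T"
        using g y by simp
    qed
    show "card ?Fh \<le> m j"
      using card_inj_on_le[OF inj img finT] cT by simp
    show "finite ?Fh"
      by (rule finite_subset[of _ "PiE U (\<lambda>_. {..<N})"]) (auto intro: finite_PiE finU)
  qed
  then show ?thesis unfolding S_def .
qed

lemma step:
  assumes UV: "U \<subseteq> V" and v: "v \<in> U"
  shows "N * card (C (U-{v})) \<le> card (C U) +
     (\<Sum>j\<in>{j\<in>I. Zs j \<subseteq> U \<and> v \<in> Zs j}. m j * card (C (U - (Zs j - Kf j v))))"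
proof -
  let ?G = "{g \<in> PiE U (\<lambda>_. {..<N}). restrict g (U-{v}) \<in> C (U-{v})}"
  let ?J = "{j\<in>I. Zs j \<subseteq> U \<and> v \<in> Zs j}"
  let ?F = "\<lambda>j. {g \<in> ?G. (Zs j, restrict g (Zs j)) \<in> B}"
  have finU: "finite U" using UV finV finite_subset by blast
  have sub: "?G \<subseteq> C U \<union> (\<Union>j\<in>?J. ?F j)"
  proof
    fix g assume g: "g \<in> ?G"
    show "g \<in> C U \<union> (\<Union>j\<in>?J. ?F j)"
    proof (cases "g \<in> C U")
      case False
      then obtain j where j: "j \<in> I" "Zs j \<subseteq> U" and bj: "(Zs j, restrict g (Zs j)) \<in> B"
        using g unfolding C_def by auto
      have "v \<in> Zs j"
      proof (rule ccontr)
        assume "v \<notin> Zs j"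
        then have "Zs j \<subseteq> U - {v}" using j by auto
        moreover have "restrict (restrict g (U-{v})) (Zs j) = restrict g (Zs j)"
          using \<open>v \<notin> Zs j\<close> j by (auto simp: restrict_def fun_eq_iff)
        ultimately show False using g bj j unfolding C_def by auto
      qed
      then show ?thesis using j bj g by auto
    qed simp
  qed
  have "card ?G \<le> card (C U \<union> (\<Union>j\<in>?J. ?F j))"
  proof (rule card_mono)
    have finP: "finite (PiE U (\<lambda>_. {..<N}))" using finU by (intro finite_PiE) auto
    show "finite (C U \<union> (\<Union>j\<in>?J. ?F j))"
      by (rule finite_subset[OF _ finP]) (use C_sub in auto)
    show "?G \<subseteq> C U \<union> (\<Union>j\<in>?J. ?F j)" by (rule sub)
  qed
  also have "\<dots> \<le> card (C U) + card (\<Union>j\<in>?J. ?F j)" by (rule card_Un_le)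
  also have "card (\<Union>j\<in>?J. ?F j) \<le> (\<Sum>j\<in>?J. card (?F j))"
    using finI by (intro card_UN_le) auto
  also have "\<dots> \<le> (\<Sum>j\<in>?J. m j * card (C (U - (Zs j - Kf j v))))"
    by (rule sum_mono) (use fiber_bound UV v in auto)
  finally show ?thesis using card_G[OF finU v] by simp
qed

lemma chain:
  fixes \<beta> :: real
  assumes P: "\<forall>U\<subseteq>V. card U \<le> n \<longrightarrow> (\<forall>v\<in>U. \<beta> * card (C (U-{v})) \<le> card (C U))"
    and b: "\<beta> \<ge> 0"
  shows "finite D \<Longrightarrow> D \<subseteq> U' \<Longrightarrow> U' \<subseteq> V \<Longrightarrow> card U' \<le> n \<Longrightarrow>
     \<beta> ^ card D * card (C (U' - D)) \<le> card (C U')"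
proof (induction D rule: finite_induct)
  case empty then show ?case by simp
next
  case (insert x D)
  have fU: "finite U'" using insert.prems finV finite_subset by blast
  have "card (U' - D) \<le> n" using insert.prems card_mono[OF fU, of "U' - D"] by auto
  moreover have "U' - D \<subseteq> V" "x \<in> U' - D" using insert by auto
  ultimately have 1: "\<beta> * card (C ((U' - D) - {x})) \<le> card (C (U' - D))" using P by blast
  have 2: "\<beta> ^ card D * card (C (U' - D)) \<le> card (C U')" using insert by auto
  have "U' - insert x D = (U' - D) - {x}" by auto
  then have "\<beta> ^ card (insert x D) * card (C (U' - insert x D)) =
      \<beta> ^ card D * (\<beta> * card (C ((U' - D) - {x})))" using insert by simp
  also have "\<dots> \<le> \<beta> ^ card D * card (C (U' - D))"
    using 1 b by (intro mult_left_mono) auto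
  also have "\<dots> \<le> card (C U')" by (rule 2)
  finally show ?case .
qed

lemma growth:
  fixes \<beta> :: real
  assumes b: "\<beta> > 0"
    and H: "\<forall>v\<in>V. \<beta> + (\<Sum>j\<in>{j\<in>I. v \<in> Zs j}. real (m j) / \<beta> ^ (l j - 1)) \<le> real N"
  shows "\<forall>U\<subseteq>V. card U \<le> n \<longrightarrow> (\<forall>v\<in>U. \<beta> * card (C (U-{v})) \<le> card (C U))"
proof (induction n)
  case 0
  then show ?case using finV by (auto dest: finite_subset)
next
  case (Suc n)
  show ?case
  proof (intro allI impI ballI)
    fix U v assume UV: "U \<subseteq> V" and cU: "card U \<le> Suc n" and v: "v \<in> U"
    have fU: "finite U" using UV finV finite_subset by blast
    let ?J = "{j\<in>I. Zs j \<subseteq> U \<and> v \<in> Zs j}"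
    let ?J' = "{j\<in>I. v \<in> Zs j}"
    define c where "c = real (card (C (U-{v})))"
    have c0: "c \<ge> 0" unfolding c_def by simp
    have cU': "card (U - {v}) \<le> n" using cU v fU by auto
    have bnd: "real (m j * card (C (U - (Zs j - Kf j v)))) \<le> real (m j) / \<beta> ^ (l j - 1) * c"
      if j: "j \<in> ?J" for j
    proof -
      define D where "D = (Zs j - Kf j v) - {v}"
      have Kj: "Kf j v \<subseteq> Zs j - {v}" "card (Zs j - Kf j v) = l j" using Kf j by auto
      have vS: "v \<in> Zs j - Kf j v" using Kj j by auto
      have fZ: "finite (Zs j)" using j fU finite_subset by blast
      have fD: "finite D" unfolding D_def using fZ by auto
      have cD: "card D = l j - 1" unfolding D_def using Kj vS fZ by auto
      have eq: "U - {v} - D = U - (Zs j - Kf j v)" unfolding D_def using vS by auto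
      have "\<beta> ^ card D * card (C (U - {v} - D)) \<le> card (C (U - {v}))"
        using chain[OF Suc.IH, of D "U - {v}"] b fD j UV cU' unfolding D_def by auto
      then have "\<beta> ^ (l j - 1) * card (C (U - (Zs j - Kf j v))) \<le> c"
        unfolding c_def cD eq .
      then have "card (C (U - (Zs j - Kf j v))) \<le> c / \<beta> ^ (l j - 1)"
        using b by (simp add: field_simps)
      then have "real (m j) * card (C (U - (Zs j - Kf j v))) \<le> real (m j) * (c / \<beta> ^ (l j - 1))"
        by (intro mult_left_mono) auto
      then show ?thesis by simp
    qed
    have "N * card (C (U-{v})) \<le> card (C U) + (\<Sum>j\<in>?J. m j * card (C (U - (Zs j - Kf j v))))"
      by (rule step[OF UV v])
    then have "real (N * card (C (U-{v}))) \<le> real (card (C U) + (\<Sum>j\<in>?J. m j * card (C (U - (Zs j - Kf j v)))))"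
      by (simp only: of_nat_le_iff)
    then have "real N * c \<le> card (C U) + (\<Sum>j\<in>?J. real (m j * card (C (U - (Zs j - Kf j v)))))"
      unfolding c_def by (simp only: of_nat_add of_nat_mult of_nat_sum)
    also have "(\<Sum>j\<in>?J. real (m j * card (C (U - (Zs j - Kf j v))))) \<le> (\<Sum>j\<in>?J. real (m j) / \<beta> ^ (l j - 1) * c)"
      by (rule sum_mono) (rule bnd)
    also have "\<dots> \<le> (\<Sum>j\<in>?J'. real (m j) / \<beta> ^ (l j - 1) * c)"
      using finI b c0 by (intro sum_mono2) auto
    also have "\<dots> = (\<Sum>j\<in>?J'. real (m j) / \<beta> ^ (l j - 1)) * c" by (simp add: sum_distrib_right)
    also have "\<dots> \<le> (real N - \<beta>) * c"
    proof (rule mult_right_mono[OF _ c0])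
      have "v \<in> V" using v UV by auto
      then show "(\<Sum>j\<in>?J'. real (m j) / \<beta> ^ (l j - 1)) \<le> real N - \<beta>" using H by fastforce
    qed
    finally show "\<beta> * card (C (U-{v})) \<le> card (C U)" unfolding c_def by (simp add: algebra_simps)
  qed
qed

lemma exists_good:
  fixes \<beta> :: real
  assumes b: "\<beta> > 0"
    and H: "\<forall>v\<in>V. \<beta> + (\<Sum>j\<in>{j\<in>I. v \<in> Zs j}. real (m j) / \<beta> ^ (l j - 1)) \<le> real N"
  shows "C V \<noteq> {}"
proof -
  have C0: "C {} = {\<lambda>_. undefined}" using Zs_ne unfolding C_def by auto
  have "\<beta> ^ card V * card (C (V - V)) \<le> card (C V)"
    using chain[OF growth[OF b H, of "card V"], of V V] b finV by auto
  moreover have "\<beta> ^ card V * card (C (V - V)) > 0" using C0 b by simp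
  ultimately show ?thesis by auto
qed

end

theorem theorem1:
  fixes V :: "'a set"
    and B :: "('a set \<times> ('a \<Rightarrow> nat)) set"
    and I :: "nat set"
    and Zs :: "nat \<Rightarrow> 'a set"
    and k m :: "nat \<Rightarrow> nat"
    and \<tau> :: real
  assumes finV: "finite V"
    and bad: "\<forall>(Z, c)\<in>B. Z \<subseteq> V \<and> c \<in> extensional Z"
    and finI: "finite I"
    and idx: "bij_betw Zs I (fst ` B)"
    and k_lt: "\<forall>i\<in>I. k i < card (Zs i)"
    and m_pos: "\<forall>i\<in>I. m i \<ge> 1"
    and ext: "\<forall>i\<in>I. \<forall>v\<in>Zs i. \<exists>K. K \<subseteq> Zs i - {v} \<and> card K = k i \<and>
               (\<forall>g\<in>extensional K.
                  finite {c. (Zs i, c) \<in> B \<and> restrict c K = g} \<and>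
                  card {c. (Zs i, c) \<in> B \<and> restrict c K = g} \<le> m i)"
    and tau_pos: "\<tau> > 0"
    and tau_eq: "phiE ((\<lambda>i. card (Zs i) - k i) ` I) \<tau>
                   - \<tau> * deriv (phiE ((\<lambda>i. card (Zs i) - k i) ` I)) \<tau> = 0"
  shows "\<exists>f :: 'a \<Rightarrow> nat. f \<in> extensional V \<and>
     card (f ` V) \<le>
       nat \<lceil>deriv (phiE ((\<lambda>i. card (Zs i) - k i) ` I)) \<tau> *
          (SUP i\<in>I. (real (Max ((\<lambda>v. card {j\<in>I. v \<in> Zs j \<and>
                         card (Zs j) - k j = card (Zs i) - k i}) ` V)) * real (m i))
                    powr (1 / real (card (Zs i) - k i)))\<rceil> \<and>
     (\<forall>i\<in>I. (Zs i, restrict f (Zs i)) \<notin> B)"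
proof -
  define L where "L = (\<lambda>i. card (Zs i) - k i)"
  define E where "E = L ` I"
  define dd where "dd = (\<lambda>i. Max ((\<lambda>v. card {j\<in>I. v \<in> Zs j \<and>
                         card (Zs j) - k j = card (Zs i) - k i}) ` V))"
  define M where "M = (SUP i\<in>I. (real (Max ((\<lambda>v. card {j\<in>I. v \<in> Zs j \<and>
                         card (Zs j) - k j = card (Zs i) - k i}) ` V)) * real (m i))
                    powr (1 / real (card (Zs i) - k i)))"
  define \<gamma> where "\<gamma> = deriv (phiE ((\<lambda>i. card (Zs i) - k i) ` I)) \<tau>"
  define N where "N = nat \<lceil>\<gamma> * M\<rceil>"
  have M_alt: "M = (SUP i\<in>I. (real (dd i) * real (m i)) powr (1 / real (L i)))"
    unfolding M_def dd_def L_def ..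
  have finE: "finite E" unfolding E_def using finI by simp
  have E_pos: "\<forall>l\<in>E. l \<ge> 1" unfolding E_def L_def using k_lt by auto
  have "((\<lambda>x. 1 + (\<Sum>l\<in>E. x ^ l)) has_real_derivative (\<Sum>l\<in>E. real l * \<tau> ^ (l - 1))) (at \<tau>)"
    proof -
    have "((\<lambda>x. 1 + (\<Sum>l\<in>E. x ^ l)) has_real_derivative 0 + (\<Sum>l\<in>E. real l * \<tau> ^ (l - Suc 0))) (at \<tau>)"
      by (intro DERIV_add DERIV_const DERIV_sum DERIV_pow)
    then show ?thesis by simp
  qed
  then have gam: "\<gamma> = (\<Sum>l\<in>E. real l * \<tau> ^ (l - 1))"
    unfolding \<gamma>_def phiE_def E_def L_def by (intro DERIV_imp_deriv) simp
  have phi: "1 + (\<Sum>l\<in>E. \<tau> ^ l) = \<tau> * \<gamma>"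
    using tau_eq unfolding \<gamma>_def[symmetric] unfolding phiE_def E_def L_def by simp
  have Ine: "I \<noteq> {}"
  proof
    assume "I = {}"
    then show False using phi gam unfolding E_def by simp
  qed
  have ZsB: "Zs ` I = fst ` B" using idx by (simp add: bij_betw_def)
  have ZsV: "\<forall>i\<in>I. Zs i \<subseteq> V"
  proof
    fix i assume "i \<in> I"
    then have "Zs i \<in> fst ` B" using ZsB by blast
    then obtain c where "(Zs i, c) \<in> B" by force
    then show "Zs i \<subseteq> V" using bad by auto
  qed
  have Zs_ne: "\<forall>i\<in>I. Zs i \<noteq> {}" using k_lt by (auto)
  have finZ: "\<forall>i\<in>I. finite (Zs i)" using ZsV finV finite_subset by blast
  define P where "P = (\<lambda>i v K. K \<subseteq> Zs i - {v} \<and> card K = k i \<and>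
               (\<forall>g\<in>extensional K.
                  finite {c. (Zs i, c) \<in> B \<and> restrict c K = g} \<and>
                  card {c. (Zs i, c) \<in> B \<and> restrict c K = g} \<le> m i))"
  define Kf where "Kf = (\<lambda>i v. SOME K. P i v K)"
  have KfP: "P i v (Kf i v)" if "i \<in> I" "v \<in> Zs i" for i v
    unfolding Kf_def by (rule someI_ex) (use ext that in \<open>auto simp: P_def\<close>)
  have Kf: "\<forall>i\<in>I. \<forall>v\<in>Zs i. Kf i v \<subseteq> Zs i - {v} \<and> card (Zs i - Kf i v) = L i \<and>
          (\<forall>g\<in>extensional (Kf i v). finite {c. (Zs i, c) \<in> B \<and> restrict c (Kf i v) = g} \<and>
             card {c. (Zs i, c) \<in> B \<and> restrict c (Kf i v) = g} \<le> m i)"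
  proof (intro ballI)
    fix i v assume i: "i \<in> I" and v: "v \<in> Zs i"
    have p: "P i v (Kf i v)" using KfP i v .
    then have "Kf i v \<subseteq> Zs i" unfolding P_def by auto
    then have "card (Zs i - Kf i v) = L i"
      using p finZ i unfolding P_def L_def by (simp add: card_Diff_subset finite_subset)
    then show "Kf i v \<subseteq> Zs i - {v} \<and> card (Zs i - Kf i v) = L i \<and>
          (\<forall>g\<in>extensional (Kf i v). finite {c. (Zs i, c) \<in> B \<and> restrict c (Kf i v) = g} \<and>
             card {c. (Zs i, c) \<in> B \<and> restrict c (Kf i v) = g} \<le> m i)"
      using p unfolding P_def by auto
  qed
  have dd_ge: "card {j\<in>I. v \<in> Zs j \<and> L j = L i} \<le> dd i" if "v \<in> V" for i v
    unfolding dd_def L_def using finV that by (intro Max_ge) auto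
  have dd_pos: "dd i \<ge> 1" if i: "i \<in> I" for i
  proof -
    obtain v where v: "v \<in> Zs i" using Zs_ne i by blast
    then have vV: "v \<in> V" using ZsV i by blast
    have ne: "{j\<in>I. v \<in> Zs j \<and> L j = L i} \<noteq> {}" using i v by blast
    have fin: "finite {j\<in>I. v \<in> Zs j \<and> L j = L i}" using finI by simp
    have "card {j\<in>I. v \<in> Zs j \<and> L j = L i} > 0" using card_gt_0_iff ne fin by blast
    then have "card {j\<in>I. v \<in> Zs j \<and> L j = L i} \<ge> 1" by simp
    then show ?thesis using dd_ge[OF vV, of i] by simp
  qed
  have bdd: "bdd_above ((\<lambda>i. (real (dd i) * real (m i)) powr (1 / real (L i))) ` I)"
    using finI by (intro bdd_above_finite) simp
  have M_ge: "(real (dd i) * real (m i)) powr (1 / real (L i)) \<le> M" if "i \<in> I" for i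
    unfolding M_alt using that bdd by (rule cSUP_upper)
  have L_pos: "L i \<ge> 1" if "i \<in> I" for i using that k_lt unfolding L_def by auto
  have dm_pos: "real (dd i) * real (m i) > 0" if "i \<in> I" for i
    using dd_pos[OF that] m_pos that by auto
  have M_pos: "M > 0"
  proof -
    obtain i where "i \<in> I" using Ine by blast
    then have "0 < (real (dd i) * real (m i)) powr (1 / real (L i))" using dm_pos[of i] dd_pos[of i] m_pos \<open>i \<in> I\<close> by fastforce
    then show ?thesis using M_ge[of i] \<open>i \<in> I\<close> by linarith
  qed
  have dmM: "real (dd i) * real (m i) \<le> M ^ L i" if i: "i \<in> I" for i
  proof -
    let ?x = "real (dd i) * real (m i)"
    have "(?x powr (1 / real (L i))) ^ L i = ?x"
    proof -
      have "(?x powr (1 / real (L i))) ^ L i = (?x powr (1 / real (L i))) powr real (L i)"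
        using dm_pos[OF i] dd_pos[OF i] m_pos i by (subst powr_realpow) auto
      also have "\<dots> = ?x" using L_pos[OF i] by (simp add: powr_powr)
      finally show ?thesis .
    qed
    moreover have "(?x powr (1 / real (L i))) ^ L i \<le> M ^ L i"
      using M_ge[OF i] by (intro power_mono) auto
    ultimately show ?thesis by simp
  qed
  define \<beta> where "\<beta> = M / \<tau>"
  have b_pos: "\<beta> > 0" unfolding \<beta>_def using M_pos tau_pos by simp
  have H: "\<forall>v\<in>V. \<beta> + (\<Sum>j\<in>{j\<in>I. v \<in> Zs j}. real (m j) / \<beta> ^ (L j - 1)) \<le> real N"
  proof
    fix v assume vV: "v \<in> V"
    let ?J = "{j\<in>I. v \<in> Zs j}"
    have finJ: "finite ?J" using finI by simp
    have inner: "(\<Sum>j\<in>{j\<in>?J. L j = l}. real (m j) / \<beta> ^ (L j - 1)) \<le> M ^ l / \<beta> ^ (l - 1)" for l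
    proof (cases "{j\<in>?J. L j = l} = {}")
      case True
      have "0 \<le> M ^ l / \<beta> ^ (l - 1)" using M_pos b_pos by simp
      then show ?thesis by (simp only: True sum.empty)
    next
      case False
      then obtain j0 where j0: "j0 \<in> ?J" "L j0 = l" by blast
      let ?A = "{j\<in>?J. L j = l}"
      have ddA: "dd j = dd j0" if "j \<in> ?A" for j
        using that j0 unfolding dd_def by (simp add: L_def)
      have cA: "card ?A \<le> dd j0"
      proof -
        have "?A = {j\<in>I. v \<in> Zs j \<and> L j = L j0}" using j0 by auto
        then show ?thesis using dd_ge[OF vV, of j0] by simp
      qed
      have d0: "real (dd j0) > 0" using dd_pos j0 by fastforce
      have "(\<Sum>j\<in>?A. real (m j)) * real (dd j0) = (\<Sum>j\<in>?A. real (dd j) * real (m j))"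
        unfolding sum_distrib_right by (rule sum.cong[OF refl]) (simp add: ddA mult.commute)
      also have "\<dots> \<le> (\<Sum>j\<in>?A. M ^ l)" by (rule sum_mono) (use dmM in auto)
      also have "\<dots> = real (card ?A) * M ^ l" by simp
      also have "\<dots> \<le> real (dd j0) * M ^ l" using cA M_pos by (intro mult_right_mono) auto
      finally have "(\<Sum>j\<in>?A. real (m j)) \<le> M ^ l" using d0 by (simp add: mult.commute)
      then have "(\<Sum>j\<in>?A. real (m j)) / \<beta> ^ (l - 1) \<le> M ^ l / \<beta> ^ (l - 1)"
        using b_pos by (intro divide_right_mono) auto
      moreover have "(\<Sum>j\<in>?A. real (m j) / \<beta> ^ (L j - 1)) = (\<Sum>j\<in>?A. real (m j)) / \<beta> ^ (l - 1)"
        by (simp add: sum_divide_distrib)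
      ultimately show ?thesis by simp
    qed
    have "(\<Sum>j\<in>?J. real (m j) / \<beta> ^ (L j - 1)) =
          (\<Sum>l\<in>E. \<Sum>j\<in>{j\<in>?J. L j = l}. real (m j) / \<beta> ^ (L j - 1))"
      by (rule sum.group[OF finJ finE, symmetric]) (auto simp: E_def)
    also have "\<dots> \<le> (\<Sum>l\<in>E. M ^ l / \<beta> ^ (l - 1))" by (rule sum_mono) (rule inner)
    also have "\<dots> = (\<Sum>l\<in>E. M * \<tau> ^ (l - 1))"
    proof (rule sum.cong[OF refl])
      fix l assume "l \<in> E"
      then have "l = Suc (l - 1)" using E_pos by fastforce
      then obtain q where q: "l = Suc q" by blast
      show "M ^ l / \<beta> ^ (l - 1) = M * \<tau> ^ (l - 1)"
        unfolding q \<beta>_def using M_pos tau_pos by (simp add: power_divide field_simps)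
    qed
    also have "\<dots> = M * (\<Sum>l\<in>E. \<tau> ^ (l - 1))" by (simp add: sum_distrib_left)
    finally have s1: "(\<Sum>j\<in>?J. real (m j) / \<beta> ^ (L j - 1)) \<le> M * (\<Sum>l\<in>E. \<tau> ^ (l - 1))" .
    have "\<tau> * (\<Sum>l\<in>E. \<tau> ^ (l - 1)) = (\<Sum>l\<in>E. \<tau> ^ l)"
      unfolding sum_distrib_left
    proof (rule sum.cong[OF refl])
      fix l assume "l \<in> E"
      then have "l = Suc (l - 1)" using E_pos by fastforce
      then obtain q where q: "l = Suc q" by blast
      show "\<tau> * \<tau> ^ (l - 1) = \<tau> ^ l" unfolding q by simp
    qed
    then have "\<tau> * (\<Sum>l\<in>E. \<tau> ^ (l - 1)) = \<tau> * \<gamma> - 1" using phi by simp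
    then have hS: "(\<Sum>l\<in>E. \<tau> ^ (l - 1)) = \<gamma> - 1 / \<tau>" using tau_pos by (simp add: field_simps)
    have "\<beta> + M * (\<Sum>l\<in>E. \<tau> ^ (l - 1)) = \<gamma> * M"
      unfolding hS \<beta>_def by (simp add: right_diff_distrib)
    also have "\<dots> \<le> real N" unfolding N_def by (rule real_nat_ceiling_ge)
    finally show "\<beta> + (\<Sum>j\<in>?J. real (m j) / \<beta> ^ (L j - 1)) \<le> real N" using s1 by simp
  qed
  interpret cnt V B I Zs Kf m L N
    by (intro cnt.intro finV finI ZsV Zs_ne Kf)
  obtain f where f: "f \<in> C V" using exists_good[OF b_pos H] by blast
  then have fP: "f \<in> PiE V (\<lambda>_. {..<N})" using C_sub by blast
  have fV: "f ` V \<subseteq> {..<N}" using fP by auto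
  have cardf: "card (f ` V) \<le> N" using card_mono[OF finite_lessThan fV] by simp
  have "\<forall>i\<in>I. (Zs i, restrict f (Zs i)) \<notin> B" using f ZsV unfolding C_def by auto
  then have "\<exists>f :: 'a \<Rightarrow> nat. f \<in> extensional V \<and> card (f ` V) \<le> N \<and>
     (\<forall>i\<in>I. (Zs i, restrict f (Zs i)) \<notin> B)" using fP cardf by (intro exI[of _ f]) (auto simp: PiE_iff)
  then show ?thesis unfolding N_def M_def \<gamma>_def .
qed

end
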